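(* Let $k\geq 2$ be an integer, $n=rk$ with $r>2$ an integer, and $e=\lceil r/2\rceil-1$. Let $V_i=\{u+\eta_i u^q\gamma^{l_i}\mid u\in\mathbb{F}_{q^k}\}$, $i=1,\dots,e(q-1)$, where $\eta_i\in G$ and $1\le l_i\le e$. Then the code $\mathcal{C}=\bigcup_{i=1}^{e(q-1)}\{\alpha V_i\mid \alpha\in\mathbb{F}_{q^n}^*\}$ is a cyclic constant dimension subspace code with cardinality $e(q^n-1)$ and minimum distance $2k-2$.
   Context: $q$ is a prime power, $\mathbb{F}_{q^n}$ is the extension of degree $n$ of $\mathbb{F}_q$. The subspace distance is $d(U,V)=\dim U+\dim V-2\dim(U\cap V)$; a code is cyclic if it is a union of orbits $\{\alpha U\mid\alpha\in\mathbb{F}_{q^n}^*\}$. Let $\xi$ be a primitive element of $\mathbb{F}_{q^k}$ and $G=\mathbb{F}_{q^k}^*/\langle\xi^{q-1}\rangle$, a cyclic group of order $q-1$ (elements of $G$ used via fixed coset representatives in $\mathbb{F}_{q^k}^*$). Let $\gamma$ be a root of an irreducible polynomial of degree $r$ over $\mathbb{F}_{q^k}$. The $V_i$ are indexed by the $e(q-1)$ distinct pairs $(\eta_i,l_i)\in G\times\{1,\dots,e\}$. *)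

theory Defs
  imports "HOL-Computational_Algebra.Polynomial"
begin

definition is_subfield :: "'a::field set \<Rightarrow> bool" where
  "is_subfield K \<longleftrightarrow> 0 \<in> K \<and> 1 \<in> K \<and>
     (\<forall>x\<in>K. \<forall>y\<in>K. x + y \<in> K \<and> x * y \<in> K) \<and>
     (\<forall>x\<in>K. - x \<in> K \<and> inverse x \<in> K)"

definition is_subspace :: "'a::field set \<Rightarrow> 'a set \<Rightarrow> bool" where
  "is_subspace K U \<longleftrightarrow> 0 \<in> U \<and> (\<forall>x\<in>U. \<forall>y\<in>U. x + y \<in> U) \<and>
     (\<forall>c\<in>K. \<forall>x\<in>U. c * x \<in> U)"

definition lin_span :: "'a::field set \<Rightarrow> 'a set \<Rightarrow> 'a set" where
  "lin_span K S = {y. \<exists>c. (\<forall>s\<in>S. c s \<in> K) \<and> y = (\<Sum>s\<in>S. c s * s)}"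

definition subspace_dim :: "'a::field set \<Rightarrow> 'a set \<Rightarrow> nat" where
  "subspace_dim K U = (LEAST m. \<exists>B. finite B \<and> B \<subseteq> U \<and> card B = m \<and> lin_span K B = U)"

definition subspace_dist :: "'a::field set \<Rightarrow> 'a set \<Rightarrow> 'a set \<Rightarrow> nat" where
  "subspace_dist K U V = subspace_dim K U + subspace_dim K V - 2 * subspace_dim K (U \<inter> V)"

definition min_distance :: "'a::field set \<Rightarrow> 'a set set \<Rightarrow> nat" where
  "min_distance K C = Min {subspace_dist K U V | U V. U \<in> C \<and> V \<in> C \<and> U \<noteq> V}"

text \<open>A code is cyclic if it is a union of orbits {\<alpha> U | \<alpha> nonzero}, i.e. closed under
  multiplication by nonzero elements of the ambient field.\<close>
definition cyclic_code :: "'a::field set set \<Rightarrow> bool" where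
  "cyclic_code C \<longleftrightarrow> (\<forall>U\<in>C. \<forall>\<alpha>. \<alpha> \<noteq> 0 \<longrightarrow> (\<lambda>x. \<alpha> * x) ` U \<in> C)"

definition irreducible_over :: "'a::field set \<Rightarrow> 'a poly \<Rightarrow> bool" where
  "irreducible_over K p \<longleftrightarrow> degree p \<ge> 1 \<and> (\<forall>i. coeff p i \<in> K) \<and>
     (\<forall>f g. (\<forall>i. coeff f i \<in> K) \<longrightarrow> (\<forall>i. coeff g i \<in> K) \<longrightarrow> p = f * g \<longrightarrow>
        degree f = 0 \<or> degree g = 0)"

end

theory Submission
  imports Defs "HOL-Computational_Algebra.Primes" "HOL-Library.FuncSet"
begin

section \<open>Subfield basics\<close>

lemma sf_0: "is_subfield K \<Longrightarrow> 0 \<in> K" by (simp add: is_subfield_def)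
lemma sf_1: "is_subfield K \<Longrightarrow> 1 \<in> K" by (simp add: is_subfield_def)
lemma sf_add: "is_subfield K \<Longrightarrow> x \<in> K \<Longrightarrow> y \<in> K \<Longrightarrow> x + y \<in> K" by (simp add: is_subfield_def)
lemma sf_mult: "is_subfield K \<Longrightarrow> x \<in> K \<Longrightarrow> y \<in> K \<Longrightarrow> x * y \<in> K" by (simp add: is_subfield_def)
lemma sf_neg: "is_subfield K \<Longrightarrow> x \<in> K \<Longrightarrow> - x \<in> K" by (simp add: is_subfield_def)
lemma sf_inv: "is_subfield K \<Longrightarrow> x \<in> K \<Longrightarrow> inverse x \<in> K" by (simp add: is_subfield_def)
lemma sf_diff: "is_subfield K \<Longrightarrow> x \<in> K \<Longrightarrow> y \<in> K \<Longrightarrow> x - y \<in> K"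
  by (metis diff_conv_add_uminus sf_add sf_neg)
lemma sf_divide: "is_subfield K \<Longrightarrow> x \<in> K \<Longrightarrow> y \<in> K \<Longrightarrow> x / y \<in> K"
  by (simp add: divide_inverse sf_inv sf_mult)
lemma sf_power: "is_subfield K \<Longrightarrow> x \<in> K \<Longrightarrow> x ^ n \<in> K"
  by (induction n) (auto simp: sf_1 sf_mult)
lemma sf_sum: "is_subfield K \<Longrightarrow> (\<And>i. i \<in> A \<Longrightarrow> f i \<in> K) \<Longrightarrow> sum f A \<in> K"
  by (induction A rule: infinite_finite_induct) (auto simp: sf_0 sf_add)
lemma sf_of_nat: "is_subfield K \<Longrightarrow> of_nat n \<in> K"
  by (induction n) (auto simp: sf_0 sf_1 sf_add)

lemma sf_card_ge2: "is_subfield (K::'a::{field,finite} set) \<Longrightarrow> card K \<ge> 2"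
proof -
  assume "is_subfield K"
  then have "{0,1} \<subseteq> K" by (simp add: sf_0 sf_1)
  then have "card {0::'a,1} \<le> card K" by (intro card_mono) auto
  then show ?thesis by simp
qed

lemma pow_card_subfield:
  fixes K :: "'a::{field,finite} set"
  assumes K: "is_subfield K" and c: "c \<in> K"
  shows "c ^ card K = c"
proof (cases "c = 0")
  case True
  then show ?thesis using sf_0[OF K] sf_card_ge2[OF K] by (auto simp: power_0_left)
next
  case False
  have fin: "finite (K - {0})" by simp
  have "(\<Prod>y\<in>K-{0}. c * y) = (\<Prod>y\<in>K-{0}. y)"
    by (rule prod.reindex_bij_witness[of _ "\<lambda>y. y / c" "\<lambda>y. c * y"])
       (use False c K in \<open>auto simp: sf_mult sf_divide\<close>)
  moreover have "(\<Prod>y\<in>K-{0}. c * y) = c ^ card (K - {0}) * (\<Prod>y\<in>K-{0}. y)"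
    by (simp add: prod.distrib)
  moreover have "(\<Prod>y\<in>K-{0}. y) \<noteq> 0" by simp
  ultimately have "c ^ card (K - {0}) = 1" by simp
  moreover have "card (K - {0}) = card K - 1" using sf_0[OF K] by simp
  ultimately have "c ^ (card K - 1) = 1" by simp
  then have "c * c ^ (card K - 1) = c" by simp
  have ck: "Suc (card K - 1) = card K" using sf_card_ge2[OF K] by simp
  have "c ^ card K = c ^ Suc (card K - 1)" by (simp only: ck)
  also have "\<dots> = c * c ^ (card K - 1)" by (rule power_Suc)
  finally show ?thesis using \<open>c * c ^ (card K - 1) = c\<close> by simp
qed

section \<open>Linear algebra over a subfield\<close>

lemma span_sub:
  assumes K: "is_subfield K" and U: "is_subspace K U" and B: "finite B" "B \<subseteq> U"
  shows "lin_span K B \<subseteq> U"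
proof
  fix y assume "y \<in> lin_span K B"
  then obtain c where c: "\<forall>s\<in>B. c s \<in> K" and y: "y = (\<Sum>s\<in>B. c s * s)"
    by (auto simp: lin_span_def)
  have "(\<Sum>s\<in>B'. c s * s) \<in> U" if "B' \<subseteq> B" for B'
    using finite_subset[OF that B(1)] that
  proof (induction B' rule: finite_induct)
    case empty then show ?case using U by (simp add: is_subspace_def)
  next
    case (insert x F)
    then have "c x * x \<in> U" using U c B by (auto simp: is_subspace_def)
    with insert show ?case using U by (auto simp: is_subspace_def)
  qed
  then show "y \<in> U" using y by blast
qed

lemma span_card_le:
  fixes K :: "'a::{field,finite} set"
  shows "card (lin_span K B) \<le> card K ^ card B"
proof -
  have fB: "finite B" by simp
  have "lin_span K B \<subseteq> (\<lambda>c. \<Sum>s\<in>B. c s * s) ` (B \<rightarrow>\<^sub>E K)"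
  proof
    fix y assume "y \<in> lin_span K B"
    then obtain c where c: "\<forall>s\<in>B. c s \<in> K" and y: "y = (\<Sum>s\<in>B. c s * s)"
      by (auto simp: lin_span_def)
    have "restrict c B \<in> B \<rightarrow>\<^sub>E K" using c by auto
    moreover have "y = (\<Sum>s\<in>B. restrict c B s * s)" using y by simp
    ultimately show "y \<in> (\<lambda>c. \<Sum>s\<in>B. c s * s) ` (B \<rightarrow>\<^sub>E K)" by blast
  qed
  then have "card (lin_span K B) \<le> card ((\<lambda>c. \<Sum>s\<in>B. c s * s) ` (B \<rightarrow>\<^sub>E K))"
    by (intro card_mono) auto
  also have "\<dots> \<le> card (B \<rightarrow>\<^sub>E K)" by (rule card_image_le) (simp add: finite_PiE)
  also have "\<dots> = card K ^ card B" by (simp add: card_PiE fB)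
  finally show ?thesis .
qed

lemma span_mem: "(\<forall>s\<in>B. c s \<in> K) \<Longrightarrow> (\<Sum>s\<in>B. c s * s) \<in> lin_span K B"
  by (auto simp: lin_span_def)

lemma span_0: "is_subfield K \<Longrightarrow> 0 \<in> lin_span K B"
  using span_mem[of B "\<lambda>_. 0" K] by (simp add: sf_0)

lemma span_base: "is_subfield K \<Longrightarrow> finite B \<Longrightarrow> b \<in> B \<Longrightarrow> b \<in> lin_span K B"
proof -
  assume K: "is_subfield K" and B: "finite B" "b \<in> B"
  have "(\<Sum>s\<in>B. (if s = b then 1 else 0) * s) = (\<Sum>s\<in>B. if s = b then b else 0)"
    by (intro sum.cong) auto
  also have "\<dots> = b" using B by (simp add: sum.delta')
  finally have eq: "(\<Sum>s\<in>B. (if s = b then 1 else 0) * s) = b" .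
  have "(\<Sum>s\<in>B. (if s = b then 1 else 0) * s) \<in> lin_span K B"
    by (rule span_mem) (use K in \<open>simp add: sf_0 sf_1\<close>)
  then show ?thesis unfolding eq .
qed

lemma span_add: "is_subfield K \<Longrightarrow> x \<in> lin_span K B \<Longrightarrow> y \<in> lin_span K B \<Longrightarrow> x + y \<in> lin_span K B"
proof -
  assume K: "is_subfield K" and "x \<in> lin_span K B" "y \<in> lin_span K B"
  then obtain c d where "\<forall>s\<in>B. c s \<in> K" "x = (\<Sum>s\<in>B. c s * s)" "\<forall>s\<in>B. d s \<in> K" "y = (\<Sum>s\<in>B. d s * s)"
    by (auto simp: lin_span_def)
  then show ?thesis
    using span_mem[of B "\<lambda>s. c s + d s" K] K
    by (simp add: sf_add sum.distrib distrib_right)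
qed

lemma span_smult: "is_subfield K \<Longrightarrow> a \<in> K \<Longrightarrow> x \<in> lin_span K B \<Longrightarrow> a * x \<in> lin_span K B"
proof -
  assume K: "is_subfield K" and a: "a \<in> K" and "x \<in> lin_span K B"
  then obtain c where "\<forall>s\<in>B. c s \<in> K" "x = (\<Sum>s\<in>B. c s * s)"
    by (auto simp: lin_span_def)
  then show ?thesis
    using span_mem[of B "\<lambda>s. a * c s" K] K a
    by (simp add: sf_mult sum_distrib_left mult.assoc)
qed

lemma span_insert:
  assumes K: "is_subfield K" and B: "finite B" and x: "x \<notin> B" and a: "a \<in> K" and s: "s \<in> lin_span K B"
  shows "a * x + s \<in> lin_span K (insert x B)"
proof -
  obtain c where c: "\<forall>t\<in>B. c t \<in> K" "s = (\<Sum>t\<in>B. c t * t)"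
    using s by (auto simp: lin_span_def)
  have "(\<Sum>t\<in>insert x B. (c(x := a)) t * t) = a * x + (\<Sum>t\<in>B. (c(x := a)) t * t)"
    using B x by simp
  also have "(\<Sum>t\<in>B. (c(x := a)) t * t) = s"
    using x c by (auto intro!: sum.cong)
  finally show ?thesis
    using span_mem[of "insert x B" "c(x := a)" K] c a by auto
qed

lemma span_extend:
  fixes K :: "'a::{field,finite} set"
  assumes K: "is_subfield K" and x: "x \<notin> lin_span K B"
  shows "card K * card (lin_span K B) \<le> card (lin_span K (insert x B))"
proof -
  have fB: "finite B" by simp
  have xB: "x \<notin> B" using x span_base[OF K fB] by blast
  have inj: "inj_on (\<lambda>(a, s). a * x + s) (K \<times> lin_span K B)"
  proof (rule inj_onI, clarsimp)
    fix a s a' s'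
    assume a: "a \<in> K" "a' \<in> K" and s: "s \<in> lin_span K B" "s' \<in> lin_span K B"
      and eq: "a * x + s = a' * x + s'"
    show "a = a' \<and> s = s'"
    proof (cases "a = a'")
      case True then show ?thesis using eq by simp
    next
      case False
      have e1: "(a - a') * x = s' + (-1) * s" using eq by (simp add: algebra_simps)
      have m: "s' + (-1) * s \<in> lin_span K B"
        using s K by (intro span_add span_smult) (auto simp: sf_neg sf_1)
      have m2: "inverse (a - a') * (s' + (-1) * s) \<in> lin_span K B"
        by (rule span_smult[OF K _ m]) (use K a in \<open>auto simp: sf_inv sf_diff\<close>)
      have "x = inverse (a - a') * ((a - a') * x)" using False by (simp add: mult.assoc[symmetric])
      also have "\<dots> = inverse (a - a') * (s' + (-1) * s)" by (simp only: e1)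
      finally have "x \<in> lin_span K B" using m2 by simp
      then show ?thesis using x by simp
    qed
  qed
  have "card K * card (lin_span K B) = card (K \<times> lin_span K B)" by (simp add: card_cartesian_product)
  also have "\<dots> = card ((\<lambda>(a, s). a * x + s) ` (K \<times> lin_span K B))" using card_image[OF inj] by simp
  also have "\<dots> \<le> card (lin_span K (insert x B))"
    by (intro card_mono) (auto intro: span_insert[OF K fB xB])
  finally show ?thesis .
qed

lemma exists_basis:
  fixes K :: "'a::{field,finite} set"
  assumes K: "is_subfield K" and U: "is_subspace K U"
  shows "\<exists>B. B \<subseteq> U \<and> lin_span K B = U \<and> card (lin_span K B) = card K ^ card B"
proof -
  have main: "\<And>B. card U - card (lin_span K B) = m \<Longrightarrow> B \<subseteq> U \<Longrightarrow> card (lin_span K B) = card K ^ card B \<Longrightarrow>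
     \<exists>B. B \<subseteq> U \<and> lin_span K B = U \<and> card (lin_span K B) = card K ^ card B" for m
  proof (induction m rule: less_induct)
    case (less m B)
    have sub: "lin_span K B \<subseteq> U" by (rule span_sub[OF K U]) (use less in auto)
    show ?case
    proof (cases "lin_span K B = U")
      case True then show ?thesis using less by blast
    next
      case False
      then obtain x where x: "x \<in> U" "x \<notin> lin_span K B" using sub by blast
      have xB: "x \<notin> B" using x(2) span_base[OF K, of B x] by auto
      let ?B = "insert x B"
      have "card K * card (lin_span K B) \<le> card (lin_span K ?B)" by (rule span_extend[OF K x(2)])
      moreover have "card (lin_span K ?B) \<le> card K ^ card ?B" by (rule span_card_le)
      moreover have "card ?B = Suc (card B)" using xB by simp
      ultimately have c: "card (lin_span K ?B) = card K ^ card ?B" using less.prems(3) by simp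
      have sub2: "lin_span K ?B \<subseteq> U" by (rule span_sub[OF K U]) (use less x in auto)
      have "lin_span K B \<subseteq> lin_span K ?B"
      proof
        fix y assume "y \<in> lin_span K B"
        then have "0 * x + y \<in> lin_span K ?B" by (intro span_insert[OF K]) (auto simp: xB sf_0 K)
        then show "y \<in> lin_span K ?B" by simp
      qed
      moreover have "x \<in> lin_span K ?B" using span_base[OF K] by auto
      ultimately have "lin_span K B \<subset> lin_span K ?B" using x by blast
      then have "card (lin_span K B) < card (lin_span K ?B)" by (intro psubset_card_mono) auto
      moreover have "card (lin_span K ?B) \<le> card U" by (intro card_mono sub2) auto
      ultimately have "card U - card (lin_span K ?B) < m" using less.prems(1) by linarith
      from less.IH[OF this refl] show ?thesis using sub2 x less.prems c by auto
    qed
  qed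
  have s0: "lin_span K {} = {0}" by (auto simp: lin_span_def)
  have e1: "{} \<subseteq> U" by simp
  have e2: "card (lin_span K {}) = card K ^ card {}" using s0 by simp
  show ?thesis by (rule main[OF refl e1 e2])
qed

lemma card_subspace_pow:
  fixes K :: "'a::{field,finite} set"
  assumes K: "is_subfield K" and U: "is_subspace K U"
  shows "\<exists>d. card U = card K ^ d"
  using exists_basis[OF K U] by auto

lemma dim_card:
  fixes K :: "'a::{field,finite} set"
  assumes K: "is_subfield K" and U: "is_subspace K U" and c: "card U = card K ^ d"
  shows "subspace_dim K U = d"
proof -
  obtain B where B: "B \<subseteq> U" "lin_span K B = U" "card (lin_span K B) = card K ^ card B"
    using exists_basis[OF K U] by blast
  have K2: "card K \<ge> 2" by (rule sf_card_ge2[OF K])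
  have "card K ^ card B = card K ^ d" using B c by simp
  then have "card B = d" using K2 by simp
  show ?thesis unfolding subspace_dim_def
  proof (rule Least_equality)
    show "\<exists>B. finite B \<and> B \<subseteq> U \<and> card B = d \<and> lin_span K B = U"
      using B \<open>card B = d\<close> by auto
  next
    fix m assume "\<exists>B. finite B \<and> B \<subseteq> U \<and> card B = m \<and> lin_span K B = U"
    then obtain B' where "card B' = m" "lin_span K B' = U" by blast
    then have "card K ^ d \<le> card K ^ m" using span_card_le[of K B'] c by simp
    then show "d \<le> m" using K2 by (simp add: power_le_imp_le_exp)
  qed
qed

lemma subspace_Int: "is_subspace K U \<Longrightarrow> is_subspace K W \<Longrightarrow> is_subspace K (U \<inter> W)"
  by (auto simp: is_subspace_def)


lemma of_nat_mod_CHAR: "(of_nat (a mod CHAR('a)) :: 'a::field) = of_nat a"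
proof -
  have "(of_nat a :: 'a) = of_nat (CHAR('a) * (a div CHAR('a)) + a mod CHAR('a))" by simp
  also have "\<dots> = of_nat (a mod CHAR('a))" by (simp only: of_nat_add of_nat_mult of_nat_CHAR) simp
  finally show ?thesis by simp
qed

lemma UNIV_subfield: "is_subfield (UNIV :: 'a::field set)"
  by (simp add: is_subfield_def)

lemma inverse_pow: 
  fixes x :: "'a::{field,finite}"
  assumes False: "x \<noteq> 0"
  shows "inverse x = x ^ (card (UNIV::'a set) - 2)"
proof -
  have N: "card (UNIV::'a set) \<ge> 2" using sf_card_ge2[OF UNIV_subfield] by simp
  have "x ^ card (UNIV::'a set) = x" using pow_card_subfield[OF UNIV_subfield] by simp
  moreover have "x ^ card (UNIV::'a set) = x * x * x ^ (card (UNIV::'a set) - 2)"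
  proof -
    have ck: "Suc (Suc (card (UNIV::'a set) - 2)) = card (UNIV::'a set)" using N by simp
    have "x ^ card (UNIV::'a set) = x ^ Suc (Suc (card (UNIV::'a set) - 2))" by (simp only: ck)
    then show ?thesis by (simp add: mult.assoc)
  qed
  ultimately have "x * (x * x ^ (card (UNIV::'a set) - 2)) = x * 1" by (simp add: mult.assoc)
  then have "x * x ^ (card (UNIV::'a set) - 2) = 1" using False by simp
  then show ?thesis by (rule inverse_unique)
qed

lemma CHAR_pos_fin: "CHAR('a::{field,finite}) > 0"
  by (rule finite_imp_CHAR_pos) simp

lemma prime_CHAR_fin: "prime CHAR('a::{field,finite})"
  by (rule prime_CHAR_semidom[OF CHAR_pos_fin])

lemma prime_subfield: "is_subfield (range (of_nat :: nat \<Rightarrow> 'a::{field,finite}))"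
proof -
  let ?P = "range (of_nat :: nat \<Rightarrow> 'a)"
  have add: "x + y \<in> ?P" if "x \<in> ?P" "y \<in> ?P" for x y
    using that by (auto simp flip: of_nat_add)
  have mul: "x * y \<in> ?P" if "x \<in> ?P" "y \<in> ?P" for x y
    using that by (auto simp flip: of_nat_mult)
  have pw: "x ^ m \<in> ?P" if "x \<in> ?P" for x m
    using that by (auto simp flip: of_nat_power)
  have neg: "- x \<in> ?P" if "x \<in> ?P" for x
  proof -
    obtain a where a: "x = of_nat a" using \<open>x \<in> ?P\<close> by auto
    have le: "a mod CHAR('a) \<le> CHAR('a)" using CHAR_pos_fin[where 'a='a] by (simp add: less_imp_le)
    have "(of_nat (CHAR('a) - a mod CHAR('a)) :: 'a) = of_nat CHAR('a) - of_nat (a mod CHAR('a))"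
      using le by (simp add: of_nat_diff)
    also have "\<dots> = - x" using a by (simp add: of_nat_mod_CHAR)
    finally show ?thesis by (metis rangeI)
  qed
  have inv: "inverse x \<in> ?P" if "x \<in> ?P" for x
    using that pw[of x] inverse_pow[of x] by (cases "x = 0") auto
  have z: "0 \<in> ?P" by (metis of_nat_0 rangeI)
  have o: "1 \<in> ?P" by (metis of_nat_1 rangeI)
  show ?thesis unfolding is_subfield_def
    apply (intro conjI ballI)
    apply (simp_all only: z o add mul neg inv)
    done
qed

lemma card_prime_subfield: "card (range (of_nat :: nat \<Rightarrow> 'a::{field,finite})) = CHAR('a)"
proof -
  have "range (of_nat :: nat \<Rightarrow> 'a) = of_nat ` {..<CHAR('a)}"
  proof
    show "range (of_nat :: nat \<Rightarrow> 'a) \<subseteq> of_nat ` {..<CHAR('a)}"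
    proof
      fix y assume "y \<in> range (of_nat :: nat \<Rightarrow> 'a)"
      then obtain a where "y = of_nat a" by auto
      then have "y = of_nat (a mod CHAR('a))" by (simp add: of_nat_mod_CHAR)
      moreover have "a mod CHAR('a) < CHAR('a)" using CHAR_pos_fin[where 'a='a] by simp
      ultimately show "y \<in> of_nat ` {..<CHAR('a)}" by auto
    qed
  qed auto
  moreover have "inj_on (of_nat :: nat \<Rightarrow> 'a) {..<CHAR('a)}"
  proof (rule inj_onI)
    fix a b assume ab: "a \<in> {..<CHAR('a)}" "b \<in> {..<CHAR('a)}" and eq: "(of_nat a :: 'a) = of_nat b"
    show "a = b"
    proof (rule ccontr)
      assume "a \<noteq> b"
      then consider "a < b" | "b < a" by linarith
      then show False
      proof cases
        case 1
        have "(of_nat (b - a) :: 'a) = 0" using eq 1 by (simp add: of_nat_diff)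
        then have "CHAR('a) dvd (b - a)" by (simp add: of_nat_eq_0_iff_char_dvd)
        then show False using 1 ab by (auto dest: dvd_imp_le)
      next
        case 2
        have "(of_nat (a - b) :: 'a) = 0" using eq 2 by (simp add: of_nat_diff)
        then have "CHAR('a) dvd (a - b)" by (simp add: of_nat_eq_0_iff_char_dvd)
        then show False using 2 ab by (auto dest: dvd_imp_le)
      qed
    qed
  qed
  ultimately show ?thesis by (simp add: card_image)
qed

lemma card_subfield_char_pow:
  fixes K :: "'a::{field,finite} set"
  assumes K: "is_subfield K"
  shows "\<exists>d. card K = CHAR('a) ^ d"
proof -
  have "is_subspace (range of_nat) K"
    unfolding is_subspace_def using K by (auto simp: sf_0 sf_add sf_mult sf_of_nat)
  from card_subspace_pow[OF prime_subfield this] show ?thesis by (simp add: card_prime_subfield)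
qed

lemma frob_add:
  fixes K :: "'a::{field,finite} set" and x y :: 'a
  assumes K: "is_subfield K"
  shows "(x + y) ^ card K = x ^ card K + y ^ card K"
proof -
  obtain d where d: "card K = CHAR('a) ^ d" using card_subfield_char_pow[OF K] by blast
  show ?thesis by (rule freshmans_dream'[OF prime_CHAR_fin d])
qed

lemma frob_fixed:
  fixes K :: "'a::{field,finite} set"
  assumes K: "is_subfield K" and t: "t ^ card K = t"
  shows "t \<in> K"
proof -
  let ?q = "card K"
  let ?f = "monom (1::'a) ?q + [:0, -1:]"
  have q2: "?q \<ge> 2" by (rule sf_card_ge2[OF K])
  have deg: "degree ?f = ?q"
    using q2 by (subst degree_add_eq_left) (auto simp: degree_monom_eq)
  then have nz: "?f \<noteq> 0" using q2 by auto
  have roots: "{x. poly ?f x = 0} = {x::'a. x ^ ?q = x}" by (auto simp: poly_monom)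
  have "K \<subseteq> {x::'a. x ^ ?q = x}" using pow_card_subfield[OF K] by auto
  moreover have "card {x::'a. x ^ ?q = x} \<le> ?q"
    using card_poly_roots_bound[OF nz] deg roots by simp
  ultimately have "K = {x::'a. x ^ ?q = x}"
    by (intro card_subset_eq) (auto intro!: le_antisym card_mono)
  then show ?thesis using t by auto
qed


definition kp :: "'a::field set \<Rightarrow> 'a poly \<Rightarrow> bool" where
  "kp K f \<longleftrightarrow> (\<forall>i. coeff f i \<in> K)"

lemma kp_0: "is_subfield K \<Longrightarrow> kp K 0" by (simp add: kp_def sf_0)
lemma kp_add: "is_subfield K \<Longrightarrow> kp K f \<Longrightarrow> kp K g \<Longrightarrow> kp K (f + g)"
  by (simp add: kp_def sf_add)
lemma kp_diff: "is_subfield K \<Longrightarrow> kp K f \<Longrightarrow> kp K g \<Longrightarrow> kp K (f - g)"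
  by (simp add: kp_def sf_diff)
lemma kp_mult: "is_subfield K \<Longrightarrow> kp K f \<Longrightarrow> kp K g \<Longrightarrow> kp K (f * g)"
  unfolding kp_def coeff_mult by (auto intro!: sf_sum sf_mult)
lemma kp_monom: "is_subfield K \<Longrightarrow> c \<in> K \<Longrightarrow> kp K (monom c n)"
  by (simp add: kp_def coeff_monom sf_0)

lemma kdiv:
  fixes K :: "'a::field set"
  assumes K: "is_subfield K" and f: "kp K f" "f \<noteq> 0"
  shows "kp K g \<Longrightarrow> \<exists>s t. g = f * s + t \<and> kp K s \<and> kp K t \<and> (t = 0 \<or> degree t < degree f)"
proof (induction "degree g" arbitrary: g rule: less_induct)
  case (less g)
  show ?case
  proof (cases "g = 0 \<or> degree g < degree f")
    case True
    then show ?thesis using less.prems K by (intro exI[of _ 0] exI[of _ g]) (auto simp: kp_0)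
  next
    case False
    then have g0: "g \<noteq> 0" and dg: "degree f \<le> degree g" by auto
    define d where "d = degree g - degree f"
    define c where "c = lead_coeff g / lead_coeff f"
    have cK: "c \<in> K" unfolding c_def using less.prems f K by (auto simp: kp_def intro!: sf_divide)
    have c0: "c \<noteq> 0" unfolding c_def using g0 f by simp
    define h where "h = g - monom c d * f"
    have kh: "kp K h" unfolding h_def using K less.prems f cK by (intro kp_diff kp_mult kp_monom) auto
    have "degree (monom c d * f) \<le> degree g"
      using degree_mult_le[of "monom c d" f] degree_monom_le[of c d] dg unfolding d_def by linarith
    then have dh: "degree h \<le> degree g" unfolding h_def by (intro degree_diff_le) auto
    have "coeff (monom c d * f) (degree g) = c * lead_coeff f"
      using dg unfolding d_def by (simp add: coeff_monom_mult)
    then have ch: "coeff h (degree g) = 0" unfolding h_def c_def using f by simp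
    show ?thesis
    proof (cases "h = 0")
      case True
      then have "g = f * monom c d + 0" unfolding h_def by (simp add: mult.commute)
      then show ?thesis using K cK by (intro exI[of _ "monom c d"] exI[of _ 0]) (auto simp: kp_0 kp_monom)
    next
      case False
      have "degree h \<noteq> degree g"
      proof
        assume "degree h = degree g"
        then have "coeff h (degree h) = 0" using ch by simp
        then show False using False by simp
      qed
      then have "degree h < degree g" using dh by simp
      from less.hyps[OF this kh] obtain s t where st: "h = f * s + t" "kp K s" "kp K t" "t = 0 \<or> degree t < degree f"
        by blast
      have "g = f * (s + monom c d) + t" using st(1) unfolding h_def by (simp add: algebra_simps)
      then show ?thesis using st K cK by (intro exI[of _ "s + monom c d"] exI[of _ t]) (auto intro: kp_add kp_monom)
    qed
  qed
qed

locale gext =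
  fixes K :: "'a::{field,finite} set" and p :: "'a poly" and \<gamma> :: 'a and r :: nat
  assumes K: "is_subfield K" and irr: "irreducible_over K p" and deg: "degree p = r"
    and root: "poly p \<gamma> = 0" and r0: "r > 0"
begin

lemma no_small_root:
  assumes "g \<noteq> 0" "kp K g" "poly g \<gamma> = 0" "degree g < r"
  shows False
proof -
  let ?S = "\<lambda>g. g \<noteq> 0 \<and> kp K g \<and> poly g \<gamma> = 0 \<and> degree g < r"
  obtain g0 where g0: "?S g0" and mn: "\<forall>h. ?S h \<longrightarrow> degree g0 \<le> degree h"
    using ex_has_least_nat[of ?S g degree] assms by blast
  have kpp: "kp K p" using irr by (simp add: irreducible_over_def kp_def)
  obtain s t where st: "p = g0 * s + t" "kp K s" "kp K t" "t = 0 \<or> degree t < degree g0"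
    using kdiv[OF K _ _ kpp] g0 by blast
  have "poly t \<gamma> = 0" using st(1) root g0 by (metis add_0 mult_zero_left poly_add poly_mult)
  have t0: "t = 0"
  proof (rule ccontr)
    assume "t \<noteq> 0"
    then have "?S t" using st g0 \<open>poly t \<gamma> = 0\<close> by auto
    then show False using mn st(4) \<open>t \<noteq> 0\<close> by fastforce
  qed
  then have pg: "p = g0 * s" using st by simp
  have ir: "\<forall>f g. (\<forall>i. coeff f i \<in> K) \<longrightarrow> (\<forall>i. coeff g i \<in> K) \<longrightarrow> p = f * g \<longrightarrow> degree f = 0 \<or> degree g = 0"
    using irr by (simp add: irreducible_over_def)
  have "(\<forall>i. coeff g0 i \<in> K) \<longrightarrow> (\<forall>i. coeff s i \<in> K) \<longrightarrow> p = g0 * s \<longrightarrow> degree g0 = 0 \<or> degree s = 0"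
    using spec[OF spec[OF ir, of g0], of s] .
  then have "degree g0 = 0 \<or> degree s = 0" using pg g0 st(2) unfolding kp_def by simp
  then show False
  proof
    assume "degree g0 = 0"
    then obtain a where a: "g0 = [:a:]" by (rule degree_eq_zeroE)
    then have "a \<noteq> 0" using g0 by auto
    then show False using g0 a by simp
  next
    assume "degree s = 0"
    have "p \<noteq> 0" using deg r0 by auto
    then have "s \<noteq> 0" using pg by auto
    then have "degree p = degree g0" using pg g0 \<open>degree s = 0\<close> by (simp add: degree_mult_eq)
    then show False using deg g0 by simp
  qed
qed

lemma coef_unique:
  assumes c: "\<forall>i<r. c i \<in> K" and s: "(\<Sum>i<r. c i * \<gamma> ^ i) = 0"
  shows "\<forall>i<r. c i = 0"
proof -
  define f where "f = (\<Sum>i<r. monom (c i) i)"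
  have cf: "coeff f j = (if j < r then c j else 0)" for j
  proof -
    have "coeff f j = (\<Sum>i<r. if j = i then c i else 0)"
      unfolding f_def coeff_sum by (intro sum.cong) (auto simp: coeff_monom)
    also have "\<dots> = (if j < r then c j else 0)" by (simp add: sum.delta)
    finally show ?thesis .
  qed
  have kf: "kp K f" unfolding kp_def cf using c K by (auto simp: sf_0)
  have pf: "poly f \<gamma> = 0" unfolding f_def poly_sum poly_monom using s by simp
  have df: "degree f < r"
  proof -
    have "degree f \<le> r - 1" by (rule degree_le) (auto simp: cf)
    then show ?thesis using r0 by linarith
  qed
  have "f = 0" using no_small_root[OF _ kf pf df] by blast
  show ?thesis
  proof (intro allI impI)
    fix i assume "i < r"
    then have "c i = coeff f i" using cf by simp
    then show "c i = 0" using \<open>f = 0\<close> by simp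
  qed
qed

lemma coef4:
  assumes ABCD: "A \<in> K" "B \<in> K" "C \<in> K" "D \<in> K" and lmj: "l < r" "m < r" "j < r"
    and eq: "A + B * \<gamma> ^ l + C * \<gamma> ^ m + D * \<gamma> ^ j = 0"
  shows "(0 \<noteq> l \<and> 0 \<noteq> m \<and> 0 \<noteq> j \<longrightarrow> A = 0) \<and> (l \<noteq> 0 \<and> l \<noteq> m \<and> l \<noteq> j \<longrightarrow> B = 0)"
proof -
  define c where "c i = (if i = 0 then A else 0) + (if i = l then B else 0) + (if i = m then C else 0)
     + (if i = j then D else 0)" for i
  have cK: "\<forall>i<r. c i \<in> K" unfolding c_def using ABCD K by (auto intro!: sf_add simp: sf_0)
  have "(\<Sum>i<r. c i * \<gamma> ^ i) = (\<Sum>i<r. (if i = 0 then A * \<gamma> ^ i else 0)) + (\<Sum>i<r. (if i = l then B * \<gamma> ^ i else 0))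
      + (\<Sum>i<r. (if i = m then C * \<gamma> ^ i else 0)) + (\<Sum>i<r. (if i = j then D * \<gamma> ^ i else 0))"
  proof -
    have pw: "c i * \<gamma> ^ i = (if i = 0 then A * \<gamma> ^ i else 0) + (if i = l then B * \<gamma> ^ i else 0)
      + (if i = m then C * \<gamma> ^ i else 0) + (if i = j then D * \<gamma> ^ i else 0)" for i
      unfolding c_def by (simp add: distrib_right)
    show ?thesis unfolding pw by (simp only: sum.distrib)
  qed
  also have "\<dots> = A + B * \<gamma> ^ l + C * \<gamma> ^ m + D * \<gamma> ^ j"
    using lmj r0 by (simp add: sum.delta)
  finally have "(\<Sum>i<r. c i * \<gamma> ^ i) = 0" using eq by simp
  from coef_unique[OF cK this] have z: "\<forall>i<r. c i = 0" .
  have "c 0 = 0" using z r0 by simp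
  moreover have "c l = 0" using z lmj by simp
  ultimately show ?thesis unfolding c_def by auto
qed

end


lemma dvd_pow_minus1: "(q::nat) \<ge> 1 \<Longrightarrow> (q - 1) dvd (q ^ k - 1)"
proof (induction k)
  case 0 then show ?case by simp
next
  case (Suc k)
  have "q ^ k \<ge> 1" using Suc.prems by simp
  then have e: "q ^ Suc k - 1 = q * (q ^ k - 1) + (q - 1)"
    using Suc.prems by (simp add: diff_mult_distrib2)
  have "(q - 1) dvd q * (q ^ k - 1) + (q - 1)" using Suc by (intro dvd_add dvd_mult) auto
  then show ?case unfolding e .
qed

lemma pow_mod_eq: "(x::'a::monoid_mult) ^ N = 1 \<Longrightarrow> x ^ j = x ^ (j mod N)"
proof -
  assume x: "x ^ N = 1"
  have "x ^ j = x ^ (N * (j div N) + j mod N)" by simp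
  also have "\<dots> = (x ^ N) ^ (j div N) * x ^ (j mod N)" by (simp only: power_add power_mult)
  finally show ?thesis using x by simp
qed

lemma card_R:
  fixes Fk R :: "'a::{field,finite} set" and \<xi> :: 'a and q :: nat
  assumes Fk: "is_subfield Fk" and big: "card Fk \<ge> 3" and q: "q \<ge> 2"
    and dv: "(q - 1) dvd (card Fk - 1)"
    and xi: "\<xi> \<in> Fk" "\<forall>x\<in>Fk - {0}. \<exists>j::nat. x = \<xi> ^ j"
    and R: "R \<subseteq> Fk - {0}"
      "\<forall>x\<in>Fk - {0}. \<exists>!\<eta>. \<eta> \<in> R \<and> x * inverse \<eta> \<in> {\<xi> ^ ((q - 1) * j) | j. True}"
  shows "card R = q - 1"
proof -
  define H where "H = {\<xi> ^ ((q - 1) * j) | j. True}"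
  define N where "N = card Fk - 1"
  have cN: "card (Fk - {0}) = N" unfolding N_def using sf_0[OF Fk] by simp
  have N0: "N > 0" unfolding N_def using big by simp
  have xi0: "\<xi> \<noteq> 0"
  proof
    assume z: "\<xi> = 0"
    have "card {0::'a, 1} < card Fk" using big by simp
    then have "\<not> Fk \<subseteq> {0, 1}" by (metis card_mono finite leD)
    then obtain x where x: "x \<in> Fk" "x \<noteq> 0" "x \<noteq> 1" by blast
    then obtain j where "x = \<xi> ^ j" using xi by blast
    then show False using x z by (cases j) auto
  qed
  have xN: "\<xi> ^ N = 1"
  proof -
    have "\<xi> ^ card Fk = \<xi>" by (rule pow_card_subfield[OF Fk xi(1)])
    moreover have "card Fk = Suc N" unfolding N_def using big by simp
    ultimately have "\<xi> * \<xi> ^ N = \<xi> * 1" by simp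
    then show ?thesis using xi0 by simp
  qed
  have img: "(\<lambda>j. \<xi> ^ j) ` {..<N} = Fk - {0}"
  proof
    show "(\<lambda>j. \<xi> ^ j) ` {..<N} \<subseteq> Fk - {0}" using xi0 sf_power[OF Fk xi(1)] by auto
  next
    show "Fk - {0} \<subseteq> (\<lambda>j. \<xi> ^ j) ` {..<N}"
    proof
      fix x assume "x \<in> Fk - {0}"
      then obtain j where "x = \<xi> ^ j" using xi by blast
      then have "x = \<xi> ^ (j mod N)" using pow_mod_eq[OF xN] by simp
      moreover have "j mod N < N" using N0 by simp
      ultimately show "x \<in> (\<lambda>j. \<xi> ^ j) ` {..<N}" by blast
    qed
  qed
  have inj: "inj_on (\<lambda>j. \<xi> ^ j) {..<N}"
    by (rule eq_card_imp_inj_on) (simp_all add: img cN)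
  define M where "M = N div (q - 1)"
  have NM: "N = (q - 1) * M" unfolding M_def using dv unfolding N_def by simp
  have M0: "M > 0" using NM N0 by (cases M) auto
  have Himg: "H = (\<lambda>j. \<xi> ^ ((q - 1) * j)) ` {..<M}"
  proof
    show "H \<subseteq> (\<lambda>j. \<xi> ^ ((q - 1) * j)) ` {..<M}"
    proof
      fix x assume "x \<in> H"
      then obtain j where x: "x = \<xi> ^ ((q - 1) * j)" unfolding H_def by blast
      have "(q - 1) * j = N * (j div M) + (q - 1) * (j mod M)"
        unfolding NM by (metis add_mult_distrib2 mult.assoc mult_div_mod_eq)
      then have "x = (\<xi> ^ N) ^ (j div M) * \<xi> ^ ((q - 1) * (j mod M))"
        using x by (simp add: power_add power_mult)
      then have "x = \<xi> ^ ((q - 1) * (j mod M))" using xN by simp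
      moreover have "j mod M < M" using M0 by simp
      ultimately show "x \<in> (\<lambda>j. \<xi> ^ ((q - 1) * j)) ` {..<M}" by blast
    qed
  qed (auto simp: H_def)
  have cH: "card H = M"
  proof -
    have "inj_on (\<lambda>j. \<xi> ^ ((q - 1) * j)) {..<M}"
    proof (rule inj_onI)
      fix a b assume ab: "a \<in> {..<M}" "b \<in> {..<M}" "\<xi> ^ ((q - 1) * a) = \<xi> ^ ((q - 1) * b)"
      have "(q - 1) * a < N" "(q - 1) * b < N" using ab q unfolding NM by auto
      then have "(q - 1) * a = (q - 1) * b" using inj ab(3) by (auto dest: inj_onD)
      then show "a = b" using q by simp
    qed
    then show ?thesis unfolding Himg by (simp add: card_image)
  qed
  have Hsub: "H \<subseteq> Fk - {0}" unfolding H_def using xi0 sf_power[OF Fk xi(1)] by auto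
  have cover: "Fk - {0} = (\<Union>\<eta>\<in>R. (\<lambda>h. \<eta> * h) ` H)"
  proof
    show "Fk - {0} \<subseteq> (\<Union>\<eta>\<in>R. (\<lambda>h. \<eta> * h) ` H)"
    proof
      fix x assume x: "x \<in> Fk - {0}"
      then obtain \<eta> where e: "\<eta> \<in> R" "x * inverse \<eta> \<in> H" using R(2) unfolding H_def by blast
      have "\<eta> \<noteq> 0" using e R(1) by auto
      then have "x = \<eta> * (x * inverse \<eta>)" by simp
      then show "x \<in> (\<Union>\<eta>\<in>R. (\<lambda>h. \<eta> * h) ` H)" using e by blast
    qed
  next
    show "(\<Union>\<eta>\<in>R. (\<lambda>h. \<eta> * h) ` H) \<subseteq> Fk - {0}"
    proof
      fix x assume "x \<in> (\<Union>\<eta>\<in>R. (\<lambda>h. \<eta> * h) ` H)"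
      then obtain \<eta> h where "\<eta> \<in> R" "h \<in> H" "x = \<eta> * h" by blast
      moreover have "\<eta> \<in> Fk" "\<eta> \<noteq> 0" "h \<in> Fk" "h \<noteq> 0" using calculation R(1) Hsub by auto
      ultimately show "x \<in> Fk - {0}" using sf_mult[OF Fk] by auto
    qed
  qed
  have disj: "\<forall>a\<in>R. \<forall>b\<in>R. a \<noteq> b \<longrightarrow> (\<lambda>h. a * h) ` H \<inter> (\<lambda>h. b * h) ` H = {}"
  proof (intro ballI impI)
    fix a b assume ab: "a \<in> R" "b \<in> R" "a \<noteq> b"
    show "(\<lambda>h. a * h) ` H \<inter> (\<lambda>h. b * h) ` H = {}"
    proof (rule ccontr)
      assume "(\<lambda>h. a * h) ` H \<inter> (\<lambda>h. b * h) ` H \<noteq> {}"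
      then obtain h1 h2 where h: "h1 \<in> H" "h2 \<in> H" "a * h1 = b * h2" by blast
      have a0: "a \<noteq> 0" "a \<in> Fk" and b0: "b \<noteq> 0" "b \<in> Fk" using ab R(1) by auto
      let ?x = "a * h1"
      have x: "?x \<in> Fk - {0}" using h(1) Hsub a0 Fk by (auto simp: sf_mult)
      have e1: "?x * inverse a = h1" using a0 by simp
      have e2: "?x * inverse b = h2" using b0 h(3) by simp
      have "?x * inverse a \<in> H" by (subst e1) (rule h(1))
      moreover have "?x * inverse b \<in> H" by (subst e2) (rule h(2))
      ultimately show False using R(2) x ab unfolding H_def by blast
    qed
  qed
  have "card (Fk - {0}) = (\<Sum>\<eta>\<in>R. card ((\<lambda>h. \<eta> * h) ` H))"
    unfolding cover by (rule card_UN_disjoint) (use disj in auto)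
  also have "\<dots> = (\<Sum>\<eta>\<in>R. M)"
  proof (rule sum.cong)
    fix \<eta> assume "\<eta> \<in> R"
    then have "\<eta> \<noteq> 0" using R(1) by auto
    then have "inj_on (\<lambda>h. \<eta> * h) H" by (auto intro: inj_onI)
    then show "card ((\<lambda>h. \<eta> * h) ` H) = M" using cH by (simp add: card_image)
  qed simp
  finally have "N = card R * M" using cN by simp
  then have "(q - 1) * M = card R * M" using NM by simp
  then show ?thesis using M0 by simp
qed


definition el :: "nat \<Rightarrow> 'a::field \<Rightarrow> 'a \<Rightarrow> nat \<Rightarrow> 'a \<Rightarrow> 'a" where
  "el q g \<eta> l u = u + \<eta> * u ^ q * g ^ l"

locale cset =
  fixes Fq Fk :: "'a::{field,finite} set"
    and q k r n e :: nat
    and \<xi> \<gamma> :: 'a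
    and p :: "'a poly"
    and R :: "'a set"
    and V :: "'a \<Rightarrow> nat \<Rightarrow> 'a set"
    and C :: "'a set set"
  assumes Fq: "is_subfield Fq" "card Fq = q"
    and Fk: "is_subfield Fk" "Fq \<subseteq> Fk" "card Fk = q ^ k"
    and ambient: "card (UNIV :: 'a set) = q ^ n"
    and k: "k \<ge> 2" and r: "r > 2" and n: "n = r * k"
    and e: "e = nat \<lceil>real r / 2\<rceil> - 1"
    and xi: "\<xi> \<in> Fk" "\<forall>x\<in>Fk - {0}. \<exists>j::nat. x = \<xi> ^ j"
    and gamma: "irreducible_over Fk p" "degree p = r" "poly p \<gamma> = 0"
    and R: "R \<subseteq> Fk - {0}"
      "\<forall>x\<in>Fk - {0}. \<exists>!\<eta>. \<eta> \<in> R \<and> x * inverse \<eta> \<in> {\<xi> ^ ((q - 1) * j) | j. True}"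
    and V_def: "\<And>\<eta> l. V \<eta> l = {u + \<eta> * u ^ q * \<gamma> ^ l | u. u \<in> Fk}"
    and C_def: "C = (\<Union>(\<eta>, l) \<in> R \<times> {1..e}. {(\<lambda>x. \<alpha> * x) ` V \<eta> l | \<alpha>. \<alpha> \<noteq> 0})"
begin

lemma q2: "q \<ge> 2" using sf_card_ge2[OF Fq(1)] Fq(2) by simp

lemma e_bounds: "e \<ge> 1" "2 * e < r"
proof -
  have c1: "real_of_int \<lceil>real r / 2\<rceil> \<ge> real r / 2" by (rule le_of_int_ceiling)
  have c2: "real_of_int \<lceil>real r / 2\<rceil> < real r / 2 + 1" using ceiling_correct[of "real r / 2"] by linarith
  have "\<lceil>real r / 2\<rceil> \<ge> 2" using c1 r by linarith
  then show "e \<ge> 1" unfolding e by linarith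
  have "2 * \<lceil>real r / 2\<rceil> < int r + 2" using c2 by linarith
  then show "2 * e < r" unfolding e using \<open>\<lceil>real r / 2\<rceil> \<ge> 2\<close> by linarith
qed

lemma l_bounds: "l \<in> {1..e} \<Longrightarrow> 0 < l \<and> l < r"
  using e_bounds by auto

sublocale G: gext Fk p \<gamma> r
  by unfold_locales (use Fk gamma r in auto)

lemma frob: "(x + y :: 'a) ^ q = x ^ q + y ^ q"
  using frob_add[OF Fq(1), of x y] Fq(2) by simp

lemma fq_fix: "c \<in> Fq \<Longrightarrow> c ^ q = c"
  using pow_card_subfield[OF Fq(1)] Fq(2) by simp

lemma fq_fixed: "t ^ q = t \<Longrightarrow> t \<in> Fq"
  using frob_fixed[OF Fq(1), of t] Fq(2) by simp

lemma V_el: "V \<eta> l = el q \<gamma> \<eta> l ` Fk"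
  unfolding V_def el_def by auto

lemma R_Fk: "\<eta> \<in> R \<Longrightarrow> \<eta> \<in> Fk \<and> \<eta> \<noteq> 0" using R(1) by auto

lemma coef2:
  assumes "A \<in> Fk" "B \<in> Fk" "0 < l" "l < r" "A + B * \<gamma> ^ l = 0"
  shows "A = 0 \<and> B = 0"
proof -
  have z: "0 \<in> Fk" by (rule sf_0[OF Fk(1)])
  have "A + B * \<gamma> ^ l + 0 * \<gamma> ^ l + 0 * \<gamma> ^ l = 0" using assms by simp
  from G.coef4[OF assms(1,2) z z assms(4) assms(4) assms(4) this] have "A = 0" using assms by simp
  moreover
  have "A + B * \<gamma> ^ l + 0 * \<gamma> ^ 0 + 0 * \<gamma> ^ 0 = 0" using assms by simp
  from G.coef4[OF assms(1,2) z z assms(4) _ _ this] have "B = 0" using assms by simp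
  ultimately show ?thesis by simp
qed

lemma el_0: "el q \<gamma> \<eta> l 0 = 0" unfolding el_def using q2 by (simp add: power_0_left)

lemma el_inj:
  assumes "\<eta> \<in> R" "l \<in> {1..e}"
  shows "inj_on (el q \<gamma> \<eta> l) Fk"
proof (rule inj_onI)
  fix u u' assume u: "u \<in> Fk" "u' \<in> Fk" and eq: "el q \<gamma> \<eta> l u = el q \<gamma> \<eta> l u'"
  have "(u - u') + (\<eta> * (u ^ q - u' ^ q)) * \<gamma> ^ l = 0"
    using eq unfolding el_def by (simp add: algebra_simps)
  moreover have "u - u' \<in> Fk" "\<eta> * (u ^ q - u' ^ q) \<in> Fk"
    using u R_Fk[OF assms(1)] Fk(1) by (auto intro!: sf_diff sf_mult sf_power)
  ultimately have "u - u' = 0" using coef2 l_bounds[OF assms(2)] by blast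
  then show "u = u'" by simp
qed

lemma card_V:
  assumes "\<eta> \<in> R" "l \<in> {1..e}"
  shows "card (V \<eta> l) = q ^ k"
  unfolding V_el using card_image[OF el_inj[OF assms]] Fk(3) by simp

lemma V_subspace:
  assumes "\<eta> \<in> R"
  shows "is_subspace Fq (V \<eta> l)"
proof -
  have add: "el q \<gamma> \<eta> l u + el q \<gamma> \<eta> l u' = el q \<gamma> \<eta> l (u + u')" for u u'
    unfolding el_def frob by (simp add: algebra_simps)
  have sm: "\<And>u. c * el q \<gamma> \<eta> l u = el q \<gamma> \<eta> l (c * u)" if "c \<in> Fq" for c
    unfolding el_def using fq_fix[OF that] by (simp add: algebra_simps power_mult_distrib)
  show ?thesis unfolding is_subspace_def V_el
  proof (intro conjI ballI)
    show "0 \<in> el q \<gamma> \<eta> l ` Fk" using el_0 sf_0[OF Fk(1)] by (metis image_eqI)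
  next
    fix x y assume "x \<in> el q \<gamma> \<eta> l ` Fk" "y \<in> el q \<gamma> \<eta> l ` Fk"
    then obtain u u' where "u \<in> Fk" "u' \<in> Fk" "x = el q \<gamma> \<eta> l u" "y = el q \<gamma> \<eta> l u'" by blast
    moreover have "u + u' \<in> Fk" using calculation sf_add[OF Fk(1)] by blast
    ultimately show "x + y \<in> el q \<gamma> \<eta> l ` Fk" using add by (metis image_eqI)
  next
    fix c x assume c: "c \<in> Fq" and "x \<in> el q \<gamma> \<eta> l ` Fk"
    then obtain u where "u \<in> Fk" "x = el q \<gamma> \<eta> l u" by blast
    moreover have "c * u \<in> Fk" using calculation c Fk(2) sf_mult[OF Fk(1)] by blast
    ultimately show "c * x \<in> el q \<gamma> \<eta> l ` Fk" using sm[OF c] by (metis image_eqI)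
  qed
qed

end


context cset
begin

lemma Fk_closed: "x \<in> Fk \<Longrightarrow> y \<in> Fk \<Longrightarrow> x * y \<in> Fk" "x \<in> Fk \<Longrightarrow> y \<in> Fk \<Longrightarrow> x - y \<in> Fk"
  "x \<in> Fk \<Longrightarrow> y \<in> Fk \<Longrightarrow> x / y \<in> Fk" "x \<in> Fk \<Longrightarrow> x ^ m \<in> Fk"
  using Fk(1) by (auto intro: sf_mult sf_diff sf_divide sf_power)

lemma KL:
  assumes \<eta>: "\<eta> \<in> R" "\<eta>' \<in> R" and l: "l \<in> {1..e}" "l' \<in> {1..e}" and \<alpha>: "\<alpha> \<noteq> 0"
    and x1: "x1 \<in> V \<eta> l" "x1 \<in> (\<lambda>x. \<alpha> * x) ` V \<eta>' l'"
    and x2: "x2 \<in> V \<eta> l" "x2 \<in> (\<lambda>x. \<alpha> * x) ` V \<eta>' l'"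
    and nz: "x1 \<noteq> 0" and ind: "x2 \<notin> (\<lambda>c. c * x1) ` Fq"
  shows "\<eta> = \<eta>' \<and> l = l' \<and> \<alpha> \<in> Fq"
proof -
  obtain u1 where u1: "u1 \<in> Fk" "x1 = el q \<gamma> \<eta> l u1" using x1(1) V_el by auto
  obtain u2 where u2: "u2 \<in> Fk" "x2 = el q \<gamma> \<eta> l u2" using x2(1) V_el by auto
  obtain v1 where v1: "v1 \<in> Fk" "x1 = \<alpha> * el q \<gamma> \<eta>' l' v1" using x1(2) V_el by auto
  obtain v2 where v2: "v2 \<in> Fk" "x2 = \<alpha> * el q \<gamma> \<eta>' l' v2" using x2(2) V_el by auto
  have eK: "\<eta> \<in> Fk" "\<eta> \<noteq> 0" "\<eta>' \<in> Fk" "\<eta>' \<noteq> 0" using R_Fk \<eta> by auto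
  have lb: "0 < l" "l < r" "0 < l'" "l' < r" "l + l' < r" using l_bounds l e_bounds by auto
  have u10: "u1 \<noteq> 0" using nz u1 el_0 by auto
  have v10: "v1 \<noteq> 0" using nz v1 el_0 by auto
  define y1 where "y1 = el q \<gamma> \<eta>' l' v1"
  define y2 where "y2 = el q \<gamma> \<eta>' l' v2"
  have cross: "x1 * y2 = x2 * y1" using v1 v2 unfolding y1_def y2_def by simp
  define A where "A = u1 * v2 - u2 * v1"
  define B where "B = \<eta> * (u1 ^ q * v2 - u2 ^ q * v1)"
  define C' where "C' = \<eta>' * (u1 * v2 ^ q - u2 * v1 ^ q)"
  define D where "D = \<eta> * \<eta>' * (u1 ^ q * v2 ^ q - u2 ^ q * v1 ^ q)"
  have expand: "x1 * y2 - x2 * y1 = A + B * \<gamma> ^ l + C' * \<gamma> ^ l' + D * \<gamma> ^ (l + l')"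
    unfolding u1(2) u2(2) y1_def y2_def A_def B_def C'_def D_def el_def
    by (simp add: algebra_simps power_add)
  have eq0: "A + B * \<gamma> ^ l + C' * \<gamma> ^ l' + D * \<gamma> ^ (l + l') = 0"
    using expand cross by simp
  have inK: "A \<in> Fk" "B \<in> Fk" "C' \<in> Fk" "D \<in> Fk"
    unfolding A_def B_def C'_def D_def using u1 u2 v1 v2 eK by (auto intro!: Fk_closed)
  have "A = 0" using G.coef4[OF inK lb(2) lb(4) lb(5) eq0] lb by simp
  then have uv: "u1 * v2 = u2 * v1" unfolding A_def by simp
  define t where "t = u2 / u1"
  have tK: "t \<in> Fk" unfolding t_def using u1 u2 by (auto intro: Fk_closed)
  have u2t: "u2 = t * u1" unfolding t_def using u10 by simp
  have v2t: "v2 = t * v1"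
  proof -
    have "u1 * v2 = u1 * (t * v1)" using uv u2t by simp
    then show ?thesis using u10 by simp
  qed
  have tq: "t ^ q \<noteq> t"
  proof
    assume tt: "t ^ q = t"
    then have tF: "t \<in> Fq" by (rule fq_fixed)
    have "x2 = t * x1" unfolding u2(2) u1(1) u1(2) el_def u2t
      using tt by (simp add: power_mult_distrib algebra_simps)
    then show False using ind tF by blast
  qed
  have tmq: "t - t ^ q \<noteq> 0" using tq by simp
  have uq0: "u1 ^ q \<noteq> 0" "v1 ^ q \<noteq> 0" using u10 v10 by auto
  have ll: "l = l'"
  proof (rule ccontr)
    assume "l \<noteq> l'"
    then have "B = 0" using G.coef4[OF inK lb(2) lb(4) lb(5) eq0] lb by simp
    then have "u1 ^ q * v2 = u2 ^ q * v1" unfolding B_def using eK by simp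
    then have "(u1 ^ q * v1) * t = (u1 ^ q * v1) * t ^ q"
      unfolding u2t v2t by (simp add: power_mult_distrib algebra_simps)
    then have "t = t ^ q" using u10 v10 by simp
    then show False using tq by simp
  qed
  have z: "0 \<in> Fk" by (rule sf_0[OF Fk(1)])
  have eq1: "A + (B + C') * \<gamma> ^ l + 0 * \<gamma> ^ 0 + D * \<gamma> ^ (l + l) = 0"
    using eq0 ll by (simp add: algebra_simps)
  have "B + C' \<in> Fk" using inK Fk(1) by (auto intro: sf_add)
  from G.coef4[OF inK(1) this z inK(4) lb(2) _ _ eq1] lb ll
  have BC: "B + C' = 0" by simp
  have "(t - t ^ q) * (\<eta> * u1 ^ q * v1 - \<eta>' * u1 * v1 ^ q) = B + C'"
    unfolding B_def C'_def u2t v2t by (simp add: power_mult_distrib algebra_simps)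
  then have "\<eta> * u1 ^ q * v1 = \<eta>' * u1 * v1 ^ q" using BC tmq by simp
  moreover have "u1 ^ q = u1 * u1 ^ (q - 1)" "v1 ^ q = v1 * v1 ^ (q - 1)"
    using q2 by (simp_all add: power_eq_if)
  ultimately have "(u1 * v1) * (\<eta> * u1 ^ (q - 1)) = (u1 * v1) * (\<eta>' * v1 ^ (q - 1))"
    by (simp add: algebra_simps)
  then have e1: "\<eta> * u1 ^ (q - 1) = \<eta>' * v1 ^ (q - 1)" using u10 v10 by simp
  define w where "w = u1 / v1"
  have wK: "w \<in> Fk - {0}" unfolding w_def using u1 v1 u10 v10 by (auto intro: Fk_closed)
  have ew: "\<eta>' * inverse \<eta> = w ^ (q - 1)"
    unfolding w_def power_divide using e1 eK v10 by (simp add: field_simps)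
  obtain j where "w = \<xi> ^ j" using xi(2) wK by blast
  then have "w ^ (q - 1) = \<xi> ^ ((q - 1) * j)" by (simp add: power_mult[symmetric] mult.commute)
  then have "\<eta>' * inverse \<eta> = \<xi> ^ ((q - 1) * j)" using ew by simp
  then have H1: "\<eta>' * inverse \<eta> \<in> {\<xi> ^ ((q - 1) * j) | j. True}" by blast
  have H2: "\<eta>' * inverse \<eta>' \<in> {\<xi> ^ ((q - 1) * j) | j. True}"
    using eK by (auto intro: exI[of _ 0])
  have "\<eta>' \<in> Fk - {0}" using eK by simp
  from R(2)[rule_format, OF this] H1 H2 \<eta> have ee: "\<eta> = \<eta>'" by blast
  then have "w ^ (q - 1) = 1" using ew eK by simp
  then have "w ^ q = w" using q2 by (simp add: power_eq_if)
  then have wF: "w \<in> Fq" by (rule fq_fixed)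
  have "u1 = w * v1" unfolding w_def using v10 by simp
  then have "x1 = w * y1" unfolding u1(2) y1_def el_def using ee ll \<open>w ^ q = w\<close>
    by (simp add: power_mult_distrib algebra_simps)
  moreover have "x1 = \<alpha> * y1" using v1 unfolding y1_def by simp
  moreover have "y1 \<noteq> 0" using nz v1 unfolding y1_def by auto
  ultimately have "\<alpha> = w" by simp
  then show ?thesis using ee ll wF by simp
qed

end


lemma scale_subspace: "is_subspace K U \<Longrightarrow> is_subspace K ((\<lambda>x. \<alpha> * x) ` U)"
  unfolding is_subspace_def
proof (elim conjE, intro conjI ballI)
  assume U: "0 \<in> U" "\<forall>x\<in>U. \<forall>y\<in>U. x + y \<in> U" "\<forall>c\<in>K. \<forall>x\<in>U. c * x \<in> U"
  show "0 \<in> (\<lambda>x. \<alpha> * x) ` U" using U(1) by (metis image_eqI mult_zero_right)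
  fix x y assume "x \<in> (\<lambda>x. \<alpha> * x) ` U" "y \<in> (\<lambda>x. \<alpha> * x) ` U"
  then obtain a b where "a \<in> U" "b \<in> U" "x = \<alpha> * a" "y = \<alpha> * b" by blast
  moreover have "x + y = \<alpha> * (a + b)" using calculation by (simp add: algebra_simps)
  ultimately show "x + y \<in> (\<lambda>x. \<alpha> * x) ` U" using U(2) by blast
next
  assume U: "0 \<in> U" "\<forall>x\<in>U. \<forall>y\<in>U. x + y \<in> U" "\<forall>c\<in>K. \<forall>x\<in>U. c * x \<in> U"
  fix c x assume c: "c \<in> K" and "x \<in> (\<lambda>x. \<alpha> * x) ` U"
  then obtain a where "a \<in> U" "x = \<alpha> * a" by blast
  moreover have "c * x = \<alpha> * (c * a)" using calculation by (simp add: algebra_simps)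
  ultimately show "c * x \<in> (\<lambda>x. \<alpha> * x) ` U" using U(3) c by blast
qed

context cset
begin

lemma q_lt: "q < q ^ k"
proof -
  have "q ^ 2 \<le> q ^ k" using k q2 by (intro power_increasing) auto
  moreover have "q < q ^ 2" using q2 by (simp add: power2_eq_square)
  ultimately show ?thesis by simp
qed

lemma V_two:
  assumes "\<eta> \<in> R" "l \<in> {1..e}"
  shows "\<exists>x1 x2. x1 \<in> V \<eta> l \<and> x2 \<in> V \<eta> l \<and> x1 \<noteq> 0 \<and> x2 \<notin> (\<lambda>c. c * x1) ` Fq"
proof -
  let ?x1 = "el q \<gamma> \<eta> l 1"
  have x1V: "?x1 \<in> V \<eta> l" unfolding V_el using sf_1[OF Fk(1)] by blast
  have x10: "?x1 \<noteq> 0"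
  proof
    assume "?x1 = 0"
    then have "1 + \<eta> * \<gamma> ^ l = 0" unfolding el_def by simp
    then have "(1::'a) = 0" using coef2[of 1 \<eta> l] sf_1[OF Fk(1)] R_Fk[OF assms(1)] l_bounds[OF assms(2)] by blast
    then show False by simp
  qed
  have "card ((\<lambda>c. c * ?x1) ` Fq) \<le> q" using card_image_le[of Fq] Fq(2) by simp
  then have "card ((\<lambda>c. c * ?x1) ` Fq) < card (V \<eta> l)" using card_V[OF assms] q_lt by simp
  then have "\<not> V \<eta> l \<subseteq> (\<lambda>c. c * ?x1) ` Fq" by (metis card_mono finite leD)
  then obtain x2 where "x2 \<in> V \<eta> l" "x2 \<notin> (\<lambda>c. c * ?x1) ` Fq" by blast
  then show ?thesis using x1V x10 by blast
qed

lemma stab: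
  assumes \<eta>: "\<eta> \<in> R" "\<eta>' \<in> R" and l: "l \<in> {1..e}" "l' \<in> {1..e}" and \<alpha>: "\<alpha> \<noteq> 0"
    and eq: "(\<lambda>x. \<alpha> * x) ` V \<eta>' l' = V \<eta> l"
  shows "\<eta> = \<eta>' \<and> l = l' \<and> \<alpha> \<in> Fq"
proof -
  obtain x1 x2 where x: "x1 \<in> V \<eta> l" "x2 \<in> V \<eta> l" "x1 \<noteq> 0" "x2 \<notin> (\<lambda>c. c * x1) ` Fq"
    using V_two[OF \<eta>(1) l(1)] by blast
  show ?thesis by (rule KL[OF \<eta> l \<alpha> x(1) _ x(2) _ x(3,4)]) (use x eq in auto)
qed

lemma scale_Fq:
  assumes c: "c \<in> Fq" "c \<noteq> 0" and \<eta>: "\<eta> \<in> R" and l: "l \<in> {1..e}"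
  shows "(\<lambda>x. c * x) ` V \<eta> l = V \<eta> l"
proof (rule card_subset_eq)
  show "(\<lambda>x. c * x) ` V \<eta> l \<subseteq> V \<eta> l"
    using V_subspace[OF \<eta>, of l] c unfolding is_subspace_def by auto
  have "inj_on (\<lambda>x. c * x) (V \<eta> l)" using c by (auto intro: inj_onI)
  then show "card ((\<lambda>x. c * x) ` V \<eta> l) = card (V \<eta> l)" by (rule card_image)
qed simp

lemma orbit_eq:
  assumes \<eta>: "\<eta> \<in> R" "\<eta>' \<in> R" and l: "l \<in> {1..e}" "l' \<in> {1..e}" and ab: "\<alpha> \<noteq> 0" "\<beta> \<noteq> 0"
  shows "((\<lambda>x. \<alpha> * x) ` V \<eta> l = (\<lambda>x. \<beta> * x) ` V \<eta>' l') \<longleftrightarrow> (\<eta> = \<eta>' \<and> l = l' \<and> \<beta> / \<alpha> \<in> Fq)"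
proof
  assume eq: "(\<lambda>x. \<alpha> * x) ` V \<eta> l = (\<lambda>x. \<beta> * x) ` V \<eta>' l'"
  have "(\<lambda>x. inverse \<alpha> * x) ` ((\<lambda>x. \<alpha> * x) ` V \<eta> l) = V \<eta> l"
    using ab by (simp add: image_image mult.assoc[symmetric])
  moreover have "(\<lambda>x. inverse \<alpha> * x) ` ((\<lambda>x. \<beta> * x) ` V \<eta>' l') = (\<lambda>x. (\<beta> / \<alpha>) * x) ` V \<eta>' l'"
    by (simp add: image_image divide_inverse algebra_simps)
  ultimately have "(\<lambda>x. (\<beta> / \<alpha>) * x) ` V \<eta>' l' = V \<eta> l" using eq by simp
  moreover have "\<beta> / \<alpha> \<noteq> 0" using ab by simp
  ultimately show "\<eta> = \<eta>' \<and> l = l' \<and> \<beta> / \<alpha> \<in> Fq" using stab[OF \<eta> l] by blast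
next
  assume h: "\<eta> = \<eta>' \<and> l = l' \<and> \<beta> / \<alpha> \<in> Fq"
  have c0: "\<beta> / \<alpha> \<noteq> 0" using ab by simp
  have "(\<lambda>x. \<beta> * x) ` V \<eta>' l' = (\<lambda>x. \<alpha> * x) ` ((\<lambda>x. (\<beta> / \<alpha>) * x) ` V \<eta> l)"
    using h ab by (simp add: image_image)
  also have "(\<lambda>x. (\<beta> / \<alpha>) * x) ` V \<eta> l = V \<eta> l" using scale_Fq[OF _ c0 \<eta>(1) l(1)] h by simp
  finally show "(\<lambda>x. \<alpha> * x) ` V \<eta> l = (\<lambda>x. \<beta> * x) ` V \<eta>' l'" by simp
qed

lemma C_mem: "U \<in> C \<longleftrightarrow> (\<exists>\<eta> l \<alpha>. \<eta> \<in> R \<and> l \<in> {1..e} \<and> \<alpha> \<noteq> 0 \<and> U = (\<lambda>x. \<alpha> * x) ` V \<eta> l)"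
proof
  assume "U \<in> C"
  then obtain a where a: "a \<in> R \<times> {1..e}"
    and Ua: "U \<in> (case a of (\<eta>, l) \<Rightarrow> {(\<lambda>x. \<alpha> * x) ` V \<eta> l | \<alpha>. \<alpha> \<noteq> 0})"
    unfolding C_def by (rule UN_E)
  obtain \<eta> l where el: "a = (\<eta>, l)" by (cases a)
  then show "\<exists>\<eta> l \<alpha>. \<eta> \<in> R \<and> l \<in> {1..e} \<and> \<alpha> \<noteq> 0 \<and> U = (\<lambda>x. \<alpha> * x) ` V \<eta> l"
    using a Ua by auto
next
  assume "\<exists>\<eta> l \<alpha>. \<eta> \<in> R \<and> l \<in> {1..e} \<and> \<alpha> \<noteq> 0 \<and> U = (\<lambda>x. \<alpha> * x) ` V \<eta> l"
  then obtain \<eta> l \<alpha> where h: "\<eta> \<in> R" "l \<in> {1..e}" "\<alpha> \<noteq> 0" "U = (\<lambda>x. \<alpha> * x) ` V \<eta> l" by blast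
  then have "U \<in> (case (\<eta>, l) of (\<eta>, l) \<Rightarrow> {(\<lambda>x. \<alpha> * x) ` V \<eta> l | \<alpha>. \<alpha> \<noteq> 0})" by auto
  moreover have "(\<eta>, l) \<in> R \<times> {1..e}" using h by simp
  ultimately show "U \<in> C" unfolding C_def by (rule UN_I[rotated])
qed

lemma C_subspace: "U \<in> C \<Longrightarrow> is_subspace Fq U \<and> card U = q ^ k"
proof -
  assume "U \<in> C"
  then obtain \<eta> l \<alpha> where h: "\<eta> \<in> R" "l \<in> {1..e}" "\<alpha> \<noteq> 0" "U = (\<lambda>x. \<alpha> * x) ` V \<eta> l"
    unfolding C_mem by blast
  have "inj_on (\<lambda>x. \<alpha> * x) (V \<eta> l)" using h by (auto intro: inj_onI)
  then have "card U = q ^ k" using h card_V[OF h(1,2)] by (simp add: card_image)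
  then show ?thesis using h scale_subspace[OF V_subspace[OF h(1)]] by simp
qed

lemma C_dim: "U \<in> C \<Longrightarrow> subspace_dim Fq U = k"
  using C_subspace dim_card[OF Fq(1)] Fq(2) by auto

lemma IL:
  assumes U: "U \<in> C" and W: "W \<in> C" and UW: "U \<noteq> W"
  shows "card (U \<inter> W) \<le> q"
proof (cases "U \<inter> W \<subseteq> {0}")
  case True
  then have "card (U \<inter> W) \<le> card {0::'a}" by (intro card_mono) auto
  then show ?thesis using q2 by simp
next
  case False
  then obtain x where x: "x \<in> U" "x \<in> W" "x \<noteq> 0" by blast
  obtain \<eta> l \<alpha> where h: "\<eta> \<in> R" "l \<in> {1..e}" "\<alpha> \<noteq> 0" "U = (\<lambda>x. \<alpha> * x) ` V \<eta> l"
    using U unfolding C_mem by blast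
  obtain \<eta>' l' \<beta> where h': "\<eta>' \<in> R" "l' \<in> {1..e}" "\<beta> \<noteq> 0" "W = (\<lambda>x. \<beta> * x) ` V \<eta>' l'"
    using W unfolding C_mem by blast
  have sub: "U \<inter> W \<subseteq> (\<lambda>c. c * x) ` Fq"
  proof
    fix y assume y: "y \<in> U \<inter> W"
    show "y \<in> (\<lambda>c. c * x) ` Fq"
    proof (rule ccontr)
      assume ny: "y \<notin> (\<lambda>c. c * x) ` Fq"
      let ?ba = "\<beta> / \<alpha>"
      have ba0: "?ba \<noteq> 0" using h h' by simp
      have inV: "inverse \<alpha> * z \<in> V \<eta> l" if "z \<in> U" for z
        using that h by (auto simp: mult.assoc[symmetric])
      have inW: "inverse \<alpha> * z \<in> (\<lambda>x. ?ba * x) ` V \<eta>' l'" if zW: "z \<in> W" for z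
      proof -
        obtain v where "v \<in> V \<eta>' l'" "z = \<beta> * v" using zW h' by blast
        moreover have "inverse \<alpha> * (\<beta> * v) = ?ba * v" by (simp add: divide_inverse algebra_simps)
        ultimately show ?thesis by blast
      qed
      have nz: "inverse \<alpha> * x \<noteq> 0" using x h by simp
      have ni: "inverse \<alpha> * y \<notin> (\<lambda>c. c * (inverse \<alpha> * x)) ` Fq"
      proof
        assume "inverse \<alpha> * y \<in> (\<lambda>c. c * (inverse \<alpha> * x)) ` Fq"
        then obtain c where c: "c \<in> Fq" "inverse \<alpha> * y = c * (inverse \<alpha> * x)" by blast
        then have "\<alpha> * (inverse \<alpha> * y) = \<alpha> * (c * (inverse \<alpha> * x))" by simp
        then have "y = c * x" using h by (simp add: algebra_simps)
        then show False using ny c by blast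
      qed
      have "\<eta> = \<eta>' \<and> l = l' \<and> ?ba \<in> Fq"
        by (rule KL[OF h(1) h'(1) h(2) h'(2) ba0 inV inW inV inW nz ni]) (use x y in auto)
      then have "U = W" using orbit_eq[OF h(1) h'(1) h(2) h'(2) h(3) h'(3)] h h' by simp
      then show False using UW by simp
    qed
  qed
  have "card (U \<inter> W) \<le> card ((\<lambda>c. c * x) ` Fq)" by (intro card_mono sub) simp
  also have "\<dots> \<le> card Fq" by (rule card_image_le) simp
  finally show ?thesis using Fq(2) by simp
qed

end


context cset
begin

lemma cyclic: "cyclic_code C"
  unfolding cyclic_code_def
proof (intro ballI allI impI)
  fix U \<alpha> assume U: "U \<in> C" and a: "(\<alpha>::'a) \<noteq> 0"
  then obtain \<eta> l \<beta> where h: "\<eta> \<in> R" "l \<in> {1..e}" "\<beta> \<noteq> 0" "U = (\<lambda>x. \<beta> * x) ` V \<eta> l"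
    unfolding C_mem by blast
  have "(\<lambda>x. \<alpha> * x) ` U = (\<lambda>x. (\<alpha> * \<beta>) * x) ` V \<eta> l" using h by (simp add: image_image mult.assoc)
  moreover have "\<alpha> * \<beta> \<noteq> 0" using a h by simp
  ultimately show "(\<lambda>x. \<alpha> * x) ` U \<in> C" unfolding C_mem using h by blast
qed

lemma card_R_q: "card R = q - 1"
proof (rule card_R[OF Fk(1) _ q2 _ xi R])
  have "q ^ 2 \<le> q ^ k" using k q2 by (intro power_increasing) auto
  moreover have "4 \<le> q ^ 2" using q2 power_mono[of 2 q 2] by simp
  ultimately show "card Fk \<ge> 3" using Fk(3) by simp
  show "(q - 1) dvd (card Fk - 1)" using Fk(3) dvd_pow_minus1 q2 by simp
qed

lemma card_C: "card C = e * (q ^ n - 1)"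
proof -
  define Dom where "Dom = (R \<times> {1..e}) \<times> (UNIV - {0::'a})"
  define f where "f = (\<lambda>b. (\<lambda>x. snd b * x) ` V (fst (fst b)) (snd (fst b)))"
  have fD: "f b \<in> C" if bD: "b \<in> Dom" for b
  proof -
    obtain \<eta> l \<alpha> where bb: "b = ((\<eta>, l), \<alpha>)" by (metis prod.collapse)
    have h: "\<eta> \<in> R" "l \<in> {1..e}" "\<alpha> \<noteq> 0" using bD bb unfolding Dom_def by auto
    show ?thesis unfolding C_mem f_def bb using h
      by (intro exI[of _ \<eta>] exI[of _ l] exI[of _ \<alpha>]) simp
  qed
  have CD: "C = f ` Dom"
  proof
    show "C \<subseteq> f ` Dom"
    proof
      fix U assume "U \<in> C"
      then obtain \<eta> l \<alpha> where h: "\<eta> \<in> R" "l \<in> {1..e}" "\<alpha> \<noteq> 0" "U = (\<lambda>x. \<alpha> * x) ` V \<eta> l"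
        unfolding C_mem by blast
      then have "((\<eta>, l), \<alpha>) \<in> Dom" "U = f ((\<eta>, l), \<alpha>)" unfolding Dom_def f_def by auto
      then show "U \<in> f ` Dom" by blast
    qed
  qed (use fD in blast)
  have fib: "card {b' \<in> Dom. f b' = f b} = q - 1" if b: "b \<in> Dom" for b
  proof -
    obtain \<eta> l \<alpha> where bb: "b = ((\<eta>, l), \<alpha>)" by (metis prod.collapse)
    have h: "\<eta> \<in> R" "l \<in> {1..e}" "\<alpha> \<noteq> 0" using b bb unfolding Dom_def by auto
    have "{b' \<in> Dom. f b' = f b} = (\<lambda>c. ((\<eta>, l), c * \<alpha>)) ` (Fq - {0})"
    proof
      show "{b' \<in> Dom. f b' = f b} \<subseteq> (\<lambda>c. ((\<eta>, l), c * \<alpha>)) ` (Fq - {0})"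
      proof
        fix b' assume "b' \<in> {b' \<in> Dom. f b' = f b}"
        then have b': "b' \<in> Dom" "f b' = f b" by auto
        obtain \<eta>' l' \<beta> where bb': "b' = ((\<eta>', l'), \<beta>)" by (metis prod.collapse)
        have h': "\<eta>' \<in> R" "l' \<in> {1..e}" "\<beta> \<noteq> 0" using b' bb' unfolding Dom_def by auto
        have "(\<lambda>x. \<alpha> * x) ` V \<eta> l = (\<lambda>x. \<beta> * x) ` V \<eta>' l'" using b' bb bb' unfolding f_def by simp
        then have "\<eta> = \<eta>' \<and> l = l' \<and> \<beta> / \<alpha> \<in> Fq" using orbit_eq[OF h(1) h'(1) h(2) h'(2) h(3) h'(3)] by simp
        moreover have "\<beta> = (\<beta> / \<alpha>) * \<alpha>" "\<beta> / \<alpha> \<noteq> 0" using h h' by auto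
        ultimately show "b' \<in> (\<lambda>c. ((\<eta>, l), c * \<alpha>)) ` (Fq - {0})" using bb' by blast
      qed
    next
      show "(\<lambda>c. ((\<eta>, l), c * \<alpha>)) ` (Fq - {0}) \<subseteq> {b' \<in> Dom. f b' = f b}"
      proof
        fix b' assume "b' \<in> (\<lambda>c. ((\<eta>, l), c * \<alpha>)) ` (Fq - {0})"
        then obtain c where c: "c \<in> Fq" "c \<noteq> 0" "b' = ((\<eta>, l), c * \<alpha>)" by blast
        have ca: "c * \<alpha> \<noteq> 0" using c h by simp
        have "(\<lambda>x. \<alpha> * x) ` V \<eta> l = (\<lambda>x. (c * \<alpha>) * x) ` V \<eta> l"
          using orbit_eq[OF h(1) h(1) h(2) h(2) h(3) ca] c h by simp
        then have "f b' = f b" using c bb unfolding f_def by simp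
        moreover have "b' \<in> Dom" using c ca h unfolding Dom_def by simp
        ultimately show "b' \<in> {b' \<in> Dom. f b' = f b}" by simp
      qed
    qed
    moreover have "inj_on (\<lambda>c. ((\<eta>, l), c * \<alpha>)) (Fq - {0})" using h by (auto intro: inj_onI)
    moreover have "card (Fq - {0}) = q - 1" using Fq sf_0[OF Fq(1)] by simp
    ultimately show ?thesis by (simp add: card_image)
  qed
  have DU: "Dom = (\<Union>z\<in>C. {b \<in> Dom. f b = z})" using fD by blast
  have finD: "finite Dom" unfolding Dom_def by simp
  have finF: "\<forall>z\<in>C. finite {b \<in> Dom. f b = z}" using finD by simp
  have "card Dom = (\<Sum>z\<in>C. card {b \<in> Dom. f b = z})"
    by (subst DU, rule card_UN_disjoint) (use finF in auto)
  also have "\<dots> = (\<Sum>z\<in>C. q - 1)"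
  proof (rule sum.cong)
    fix z assume "z \<in> C"
    then obtain b where "b \<in> Dom" "z = f b" using CD by blast
    then show "card {b \<in> Dom. f b = z} = q - 1" using fib by simp
  qed simp
  finally have c1: "card Dom = card C * (q - 1)" by simp
  have "card Dom = card R * e * (q ^ n - 1)"
    unfolding Dom_def using ambient by (simp add: card_cartesian_product)
  then have "card C * (q - 1) = (q - 1) * (e * (q ^ n - 1))" using c1 card_R_q by simp
  then show ?thesis using q2 by simp
qed

lemma dist_facts:
  assumes U: "U \<in> C" and W: "W \<in> C" and UW: "U \<noteq> W"
  shows "subspace_dist Fq U W \<ge> 2 * k - 2"
    and "(\<exists>x. x \<in> U \<inter> W \<and> x \<noteq> 0) \<Longrightarrow> subspace_dist Fq U W = 2 * k - 2"
proof -
  have sU: "is_subspace Fq U" "is_subspace Fq W" using C_subspace U W by auto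
  have sI: "is_subspace Fq (U \<inter> W)" by (rule subspace_Int[OF sU])
  obtain d where d: "card (U \<inter> W) = q ^ d" using card_subspace_pow[OF Fq(1) sI] Fq(2) by auto
  have dimI: "subspace_dim Fq (U \<inter> W) = d" using dim_card[OF Fq(1) sI] d Fq(2) by simp
  have "q ^ d \<le> q" using IL[OF U W UW] d by simp
  then have d1: "d \<le> 1"
  proof -
    assume "q ^ d \<le> q"
    show "d \<le> 1"
    proof (rule ccontr)
      assume "\<not> d \<le> 1"
      then have "q ^ 2 \<le> q ^ d" using q2 by (intro power_increasing) auto
      moreover have "q < q ^ 2" using q2 by (simp add: power2_eq_square)
      ultimately show False using \<open>q ^ d \<le> q\<close> by simp
    qed
  qed
  have dist: "subspace_dist Fq U W = k + k - 2 * d"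
    unfolding subspace_dist_def dimI using C_dim U W by simp
  show "subspace_dist Fq U W \<ge> 2 * k - 2" using dist d1 by simp
  assume "\<exists>x. x \<in> U \<inter> W \<and> x \<noteq> 0"
  then obtain x where x: "x \<in> U \<inter> W" "x \<noteq> 0" by blast
  have "0 \<in> U \<inter> W" using sI unfolding is_subspace_def by simp
  then have "{0, x} \<subseteq> U \<inter> W" using x by simp
  then have "card {0, x} \<le> card (U \<inter> W)" by (intro card_mono) auto
  then have "2 \<le> q ^ d" using x d by simp
  then have "d \<noteq> 0" by (cases d) auto
  then have "d = 1" using d1 by simp
  then show "subspace_dist Fq U W = 2 * k - 2" using dist by simp
qed

lemma exists_pair: "\<exists>U W. U \<in> C \<and> W \<in> C \<and> U \<noteq> W \<and> (\<exists>x. x \<in> U \<inter> W \<and> x \<noteq> 0)"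
proof -
  have "1 \<in> Fk - {0}" using sf_1[OF Fk(1)] by simp
  then obtain \<eta> where \<eta>: "\<eta> \<in> R" using R(2) by blast
  have l: "1 \<in> {1..e}" using e_bounds by simp
  have eK: "\<eta> \<in> Fk" "\<eta> \<noteq> 0" using R_Fk[OF \<eta>] by auto
  have lb: "0 < (1::nat)" "1 < r" using r by auto
  have "card Fq < card Fk" using Fq(2) Fk(3) q_lt by simp
  then have "\<not> Fk \<subseteq> Fq" by (metis card_mono finite leD)
  then obtain u where u: "u \<in> Fk" "u \<notin> Fq" by blast
  have u0: "u \<noteq> 0" using u sf_0[OF Fq(1)] by auto
  let ?V = "V \<eta> 1"
  define x where "x = el q \<gamma> \<eta> 1 u"
  define y where "y = el q \<gamma> \<eta> 1 1"
  have xV: "x \<in> ?V" unfolding x_def V_el using u by blast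
  have yV: "y \<in> ?V" unfolding y_def V_el using sf_1[OF Fk(1)] by blast
  have x0: "x \<noteq> 0"
  proof
    assume "x = 0"
    then have "u + (\<eta> * u ^ q) * \<gamma> ^ 1 = 0" unfolding x_def el_def by simp
    moreover have "\<eta> * u ^ q \<in> Fk" using eK u Fk_closed by auto
    ultimately have "u = 0" using coef2[OF u(1) _ lb] by blast
    then show False using u0 by simp
  qed
  have y0: "y \<noteq> 0"
  proof
    assume "y = 0"
    then have "1 + \<eta> * \<gamma> ^ 1 = 0" unfolding y_def el_def by simp
    then have "(1::'a) = 0" using coef2[OF sf_1[OF Fk(1)] eK(1) lb] by blast
    then show False by simp
  qed
  define \<alpha> where "\<alpha> = x / y"
  have a0: "\<alpha> \<noteq> 0" unfolding \<alpha>_def using x0 y0 by simp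
  have xa: "x = \<alpha> * y" unfolding \<alpha>_def using y0 by simp
  let ?W = "(\<lambda>z. \<alpha> * z) ` ?V"
  have VC: "?V \<in> C" unfolding C_mem using \<eta> l by (intro exI[of _ \<eta>] exI[of _ 1] exI[of _ 1]) simp
  have WC: "?W \<in> C" unfolding C_mem using \<eta> l a0 by blast
  have xW: "x \<in> ?W" using xa yV by blast
  have ne: "?V \<noteq> ?W"
  proof
    assume "?V = ?W"
    then have "\<alpha> \<in> Fq" using stab[OF \<eta> \<eta> l l a0] by simp
    then have aK: "\<alpha> \<in> Fk" using Fk(2) by blast
    have "(u - \<alpha>) + (\<eta> * (u ^ q - \<alpha>)) * \<gamma> ^ 1 = x - \<alpha> * y"
      unfolding x_def y_def el_def by (simp add: algebra_simps)
    then have "(u - \<alpha>) + (\<eta> * (u ^ q - \<alpha>)) * \<gamma> ^ 1 = 0" using xa by simp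
    moreover have "u - \<alpha> \<in> Fk" "\<eta> * (u ^ q - \<alpha>) \<in> Fk" using u aK eK Fk_closed by auto
    ultimately have "u - \<alpha> = 0" using coef2[OF _ _ lb] by blast
    then show False using u \<open>\<alpha> \<in> Fq\<close> by simp
  qed
  show ?thesis using VC WC ne xV xW x0 by blast
qed

lemma min_dist: "min_distance Fq C = 2 * k - 2"
  unfolding min_distance_def
proof (rule Min_eqI)
  let ?A = "{subspace_dist Fq U V | U V. U \<in> C \<and> V \<in> C \<and> U \<noteq> V}"
  have "?A \<subseteq> (\<lambda>(U, V). subspace_dist Fq U V) ` (C \<times> C)" by auto
  then show "finite ?A" by (rule finite_subset) simp
  show "\<And>y. y \<in> ?A \<Longrightarrow> 2 * k - 2 \<le> y" using dist_facts(1) by blast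
  obtain U W where "U \<in> C" "W \<in> C" "U \<noteq> W" "\<exists>x. x \<in> U \<inter> W \<and> x \<noteq> 0" using exists_pair by blast
  then have "subspace_dist Fq U W = 2 * k - 2" using dist_facts(2) by blast
  then show "2 * k - 2 \<in> ?A" using \<open>U \<in> C\<close> \<open>W \<in> C\<close> \<open>U \<noteq> W\<close> by (metis (mono_tags, lifting) mem_Collect_eq)
qed

lemma main: "(\<forall>U\<in>C. is_subspace Fq U \<and> subspace_dim Fq U = k)
     \<and> cyclic_code C
     \<and> card C = e * (q ^ n - 1)
     \<and> min_distance Fq C = 2 * k - 2"
  using C_subspace C_dim cyclic card_C min_dist by blast

end

theorem lemma3p3:
  fixes Fq Fk :: "'a::{field,finite} set"
    and q k r n e :: nat
    and \<xi> \<gamma> :: 'a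
    and p :: "'a poly"
    and R :: "'a set"
    and V :: "'a \<Rightarrow> nat \<Rightarrow> 'a set"
    and C :: "'a set set"
  assumes Fq: "is_subfield Fq" "card Fq = q"
    and Fk: "is_subfield Fk" "Fq \<subseteq> Fk" "card Fk = q ^ k"
    and ambient: "card (UNIV :: 'a set) = q ^ n"
    and k: "k \<ge> 2" and r: "r > 2" and n: "n = r * k"
    and e: "e = nat \<lceil>real r / 2\<rceil> - 1"
    and xi: "\<xi> \<in> Fk" "\<forall>x\<in>Fk - {0}. \<exists>j::nat. x = \<xi> ^ j"
    and gamma: "irreducible_over Fk p" "degree p = r" "poly p \<gamma> = 0"
    and R: "R \<subseteq> Fk - {0}"
      "\<forall>x\<in>Fk - {0}. \<exists>!\<eta>. \<eta> \<in> R \<and> x * inverse \<eta> \<in> {\<xi> ^ ((q - 1) * j) | j. True}"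
    and V_def: "\<And>\<eta> l. V \<eta> l = {u + \<eta> * u ^ q * \<gamma> ^ l | u. u \<in> Fk}"
    and C_def: "C = (\<Union>(\<eta>, l) \<in> R \<times> {1..e}. {(\<lambda>x. \<alpha> * x) ` V \<eta> l | \<alpha>. \<alpha> \<noteq> 0})"
  shows "(\<forall>U\<in>C. is_subspace Fq U \<and> subspace_dim Fq U = k)
     \<and> cyclic_code C
     \<and> card C = e * (q ^ n - 1)
     \<and> min_distance Fq C = 2 * k - 2"
proof -
  interpret cset Fq Fk q k r n e \<xi> \<gamma> p R V C
    by (rule cset.intro[OF Fq(1) Fq(2) Fk(1) Fk(2) Fk(3) ambient k r n e xi(1) xi(2)
        gamma(1) gamma(2) gamma(3) R(1) R(2) V_def C_def])
  show ?thesis by (rule main)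
qed

end
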